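(* Fix $d\ge 2$. The function $C(\rho,\sigma)=\sqrt{1-\mathcal{F}_2(\rho,\sigma)}$, where $\mathcal{F}_2(\rho,\sigma)=\operatorname{tr}(\rho\sigma)/\max[\operatorname{tr}(\rho^2),\operatorname{tr}(\sigma^2)]$, is a metric on the set of $d\times d$ density matrices; i.e. it is nonnegative, vanishes iff $\rho=\sigma$, is symmetric, and satisfies $C(\rho,\sigma)\le C(\rho,\tau)+C(\tau,\sigma)$ for all density matrices $\rho,\sigma,\tau$.
   Context: A density matrix is a positive semidefinite complex matrix of unit trace. *)

theory Defs
  imports "HOL-Analysis.Analysis"
begin

text \<open>Complex d x d matrices are rendered as complex^'n^'n with d = CARD('n).\<close>

definition hermitian_mat :: "complex^'n^'n \<Rightarrow> bool" where
  "hermitian_mat A \<longleftrightarrow> (\<forall>i j. A $ i $ j = cnj (A $ j $ i))"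

definition psd_mat :: "complex^'n::finite^'n \<Rightarrow> bool" where
  "psd_mat A \<longleftrightarrow> hermitian_mat A \<and>
     (\<forall>x :: complex^'n. 0 \<le> Re (\<Sum>i\<in>UNIV. \<Sum>j\<in>UNIV. cnj (x $ i) * A $ i $ j * x $ j))"

definition density_matrix :: "complex^'n::finite^'n \<Rightarrow> bool" where
  "density_matrix A \<longleftrightarrow> psd_mat A \<and> trace A = 1"

text \<open>F_2(rho,sigma) = tr(rho sigma) / max(tr(rho^2), tr(sigma^2)); these traces are real
  for Hermitian matrices, so we take real parts.\<close>
definition F2 :: "complex^'n::finite^'n \<Rightarrow> complex^'n^'n \<Rightarrow> real" where
  "F2 \<rho> \<sigma> = Re (trace (\<rho> ** \<sigma>)) / max (Re (trace (\<rho> ** \<rho>))) (Re (trace (\<sigma> ** \<sigma>)))"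

definition C_dist :: "complex^'n::finite^'n \<Rightarrow> complex^'n^'n \<Rightarrow> real" where
  "C_dist \<rho> \<sigma> = sqrt (1 - F2 \<rho> \<sigma>)"

end

theory Submission
  imports Defs
begin


definition D0 :: "'a::real_inner \<Rightarrow> 'a \<Rightarrow> real" where
  "D0 p q = sqrt (1 - inner p q / max ((norm p)\<^sup>2) ((norm q)\<^sup>2))"

lemma D0_emb:
  fixes p q :: "'a::real_inner" and P Q :: "'b::real_inner"
  assumes "norm P = 1" "norm Q = 1" "inner P Q = inner p q / max ((norm p)\<^sup>2) ((norm q)\<^sup>2)"
  shows "D0 p q = norm (P - Q) / sqrt 2"
proof -
  have "(norm (P - Q))\<^sup>2 = 2 * (1 - inner P Q)"
  proof -
    have "inner P P = 1" "inner Q Q = 1" using assms(1,2) by (metis power2_norm_eq_inner power_one)+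
    thus ?thesis by (simp add: power2_norm_eq_inner inner_diff_left inner_diff_right inner_commute)
  qed
  hence "norm (P - Q) = sqrt (2 * (1 - inner P Q))"
    by (metis norm_ge_zero real_sqrt_unique)
  hence "norm (P - Q) = sqrt 2 * sqrt (1 - inner P Q)" by (simp only: real_sqrt_mult)
  thus ?thesis unfolding D0_def using assms(3) by simp
qed

lemma sorted_tri:
  fixes x y z :: "'a::real_inner"
  assumes "0 < norm x" "norm x \<le> norm y" "norm y \<le> norm z"
  shows "\<exists>X Y Z :: 'a \<times> 'a \<times> 'a. D0 x y = norm (X - Y) / sqrt 2 \<and> D0 y x = norm (Y - X) / sqrt 2
     \<and> D0 x z = norm (X - Z) / sqrt 2 \<and> D0 z x = norm (Z - X) / sqrt 2
     \<and> D0 y z = norm (Y - Z) / sqrt 2 \<and> D0 z y = norm (Z - Y) / sqrt 2"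
proof -
  define r1 r2 r3 where "r1 = norm x" "r2 = norm y" "r3 = norm z"
  define c1 where "c1 = r1"
  define c2 where "c2 = sqrt (r2\<^sup>2 - r1\<^sup>2)"
  define c3 where "c3 = sqrt (r3\<^sup>2 - r2\<^sup>2)"
  have p: "0 < r1" "0 < r2" "0 < r3" using assms r1_r2_r3_def by auto
  have sq: "c2\<^sup>2 = r2\<^sup>2 - r1\<^sup>2" "c3\<^sup>2 = r3\<^sup>2 - r2\<^sup>2"
    using assms r1_r2_r3_def c2_def c3_def by (auto intro!: real_sqrt_pow2 power_mono)
  have sq': "c2 * c2 = r2 * r2 - r1 * r1" "c3 * c3 = r3 * r3 - r2 * r2" using sq by (simp_all add: power2_eq_square)
  have mx: "max (r1\<^sup>2) (r2\<^sup>2) = r2\<^sup>2" "max (r2\<^sup>2) (r1\<^sup>2) = r2\<^sup>2"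
     "max (r1\<^sup>2) (r3\<^sup>2) = r3\<^sup>2" "max (r3\<^sup>2) (r1\<^sup>2) = r3\<^sup>2"
     "max (r2\<^sup>2) (r3\<^sup>2) = r3\<^sup>2" "max (r3\<^sup>2) (r2\<^sup>2) = r3\<^sup>2"
    using assms r1_r2_r3_def by (auto intro!: power_mono)
  define X :: "'a \<times> 'a \<times> 'a" where "X = ((c1/r1\<^sup>2) *\<^sub>R x, 0, 0)"
  define Y :: "'a \<times> 'a \<times> 'a" where "Y = ((c1/r2\<^sup>2) *\<^sub>R y, (c2/r2\<^sup>2) *\<^sub>R y, 0)"
  define Z :: "'a \<times> 'a \<times> 'a" where "Z = ((c1/r3\<^sup>2) *\<^sub>R z, (c2/r3\<^sup>2) *\<^sub>R z, (c3/r3\<^sup>2) *\<^sub>R z)"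
  have nx: "inner x x = r1\<^sup>2" "inner y y = r2\<^sup>2" "inner z z = r3\<^sup>2"
    using r1_r2_r3_def by (auto simp: power2_norm_eq_inner)
  have iXX: "inner X X = 1" using p unfolding X_def c1_def by (simp add: nx power2_eq_square)
  have iYY: "inner Y Y = 1" using p unfolding Y_def
    by (simp add: nx field_simps) (simp add: c1_def sq' power2_eq_square)
  have iZZ: "inner Z Z = 1" using p unfolding Z_def
    apply (simp add: nx field_simps)
    by (simp add: c1_def sq' power2_eq_square)
  have iXY: "inner X Y = inner x y / r2\<^sup>2" using p unfolding X_def Y_def c1_def
    by (simp add: field_simps power2_eq_square)
  have iXZ: "inner X Z = inner x z / r3\<^sup>2" using p unfolding X_def Z_def c1_def
    by (simp add: field_simps power2_eq_square)
  have iYZ: "inner Y Z = inner y z / r3\<^sup>2"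
  proof -
    have e: "c2*c2 + r1*r1 = r2*r2" using sq'(1) by simp
    have h: "\<And>K. c2 * (c2 * K) + r1 * (r1 * K) = r2 * (r2 * K)"
      by (metis e distrib_right mult.assoc)
    show ?thesis using p unfolding Y_def Z_def apply (simp add: field_simps c1_def power2_eq_square)
      by (rule h)
  qed
  have n1: "norm X = 1" "norm Y = 1" "norm Z = 1" using iXX iYY iZZ
    by (simp_all add: norm_eq_sqrt_inner)
  show ?thesis
    apply (rule exI[of _ X], rule exI[of _ Y], rule exI[of _ Z])
    using n1 iXY iXZ iYZ mx
    by (auto intro!: D0_emb simp: r1_r2_r3_def[symmetric] inner_commute)
qed

lemma tri3:
  fixes P Q M :: "'b::real_normed_vector"
  assumes "D0 p q = norm (P - Q) / sqrt 2" "D0 p m = norm (P - M) / sqrt 2" "D0 m q = norm (M - Q) / sqrt 2"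
  shows "D0 p q \<le> D0 p m + D0 m q"
proof -
  have "norm (P - Q) \<le> norm (P - M) + norm (M - Q)" by (rule norm_diff_triangle_le[of _ M]) simp_all
  hence "norm (P - Q) / sqrt 2 \<le> (norm (P - M) + norm (M - Q)) / sqrt 2"
    by (simp add: divide_right_mono)
  thus ?thesis using assms by (simp add: add_divide_distrib)
qed

lemma sorted_T:
  fixes x y z :: "'a::real_inner"
  assumes "0 < norm x" "norm x \<le> norm y" "norm y \<le> norm z"
  shows "D0 x y \<le> D0 x z + D0 z y \<and> D0 x z \<le> D0 x y + D0 y z
    \<and> D0 y x \<le> D0 y z + D0 z x \<and> D0 y z \<le> D0 y x + D0 x z
    \<and> D0 z x \<le> D0 z y + D0 y x \<and> D0 z y \<le> D0 z x + D0 x y"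
proof -
  obtain X Y Z :: "'a \<times> 'a \<times> 'a" where e: "D0 x y = norm (X - Y) / sqrt 2" "D0 y x = norm (Y - X) / sqrt 2"
     "D0 x z = norm (X - Z) / sqrt 2" "D0 z x = norm (Z - X) / sqrt 2"
     "D0 y z = norm (Y - Z) / sqrt 2" "D0 z y = norm (Z - Y) / sqrt 2"
    using sorted_tri[OF assms] by blast
  show ?thesis using tri3[OF e(1) e(3) e(6)] tri3[OF e(3) e(1) e(5)] tri3[OF e(2) e(5) e(4)]
    tri3[OF e(5) e(2) e(3)] tri3[OF e(4) e(6) e(2)] tri3[OF e(6) e(4) e(1)] by blast
qed

lemma D0_tri:
  fixes a b c :: "'a::real_inner"
  assumes "a \<noteq> 0" "b \<noteq> 0" "c \<noteq> 0"
  shows "D0 a b \<le> D0 a c + D0 c b"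
proof -
  have p: "0 < norm a" "0 < norm b" "0 < norm c" using assms by auto
  let ?T = "\<lambda>x y z. D0 x y \<le> D0 x z + D0 z y \<and> D0 x z \<le> D0 x y + D0 y z
    \<and> D0 y x \<le> D0 y z + D0 z x \<and> D0 y z \<le> D0 y x + D0 x z
    \<and> D0 z x \<le> D0 z y + D0 y x \<and> D0 z y \<le> D0 z x + D0 x y"
  show ?thesis
  proof (cases "norm a \<le> norm b")
    case ab: True
    show ?thesis
    proof (cases "norm b \<le> norm c")
      case True
      have "?T a b c" by (rule sorted_T) (use True ab p in linarith)+
      thus ?thesis by blast
    next
      case False
      show ?thesis
      proof (cases "norm a \<le> norm c")
        case True
        have "?T a c b" by (rule sorted_T) (use True ab False p in linarith)+
        thus ?thesis by blast
      next
        case F2: False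
        have "?T c a b" by (rule sorted_T) (use F2 ab False p in linarith)+
        thus ?thesis by blast
      qed
    qed
  next
    case ba: False
    show ?thesis
    proof (cases "norm a \<le> norm c")
      case True
      have "?T b a c" by (rule sorted_T) (use True ba p in linarith)+
      thus ?thesis by blast
    next
      case False
      show ?thesis
      proof (cases "norm b \<le> norm c")
        case True
        have "?T b c a" by (rule sorted_T) (use True ba False p in linarith)+
        thus ?thesis by blast
      next
        case F2: False
        have "?T c b a" by (rule sorted_T) (use F2 ba False p in linarith)+
        thus ?thesis by blast
      qed
    qed
  qed
qed

lemma herm_inner:
  fixes A B :: "complex^'n::finite^'n"
  assumes "hermitian_mat A"
  shows "Re (trace (A ** B)) = inner A B"
proof -
  have "Re (trace (A ** B)) = (\<Sum>i\<in>UNIV. \<Sum>k\<in>UNIV. Re (A $ i $ k * B $ k $ i))"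
    by (simp add: trace_def matrix_matrix_mult_def Re_sum)
  also have "\<dots> = (\<Sum>i\<in>UNIV. \<Sum>k\<in>UNIV. inner (A $ k $ i) (B $ k $ i))"
  proof -
    have "Re (A $ i $ k * B $ k $ i) = inner (A $ k $ i) (B $ k $ i)" for i k
    proof -
      have "A $ i $ k = cnj (A $ k $ i)" using assms unfolding hermitian_mat_def by blast
      thus ?thesis by (simp add: inner_complex_def)
    qed
    thus ?thesis by simp
  qed
  also have "\<dots> = (\<Sum>k\<in>UNIV. \<Sum>i\<in>UNIV. inner (A $ k $ i) (B $ k $ i))"
    by (rule sum.swap)
  also have "\<dots> = inner A B" by (simp add: inner_vec_def)
  finally show ?thesis .
qed

lemma C_D0:
  fixes A B :: "complex^'n::finite^'n"
  assumes "hermitian_mat A" "hermitian_mat B"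
  shows "C_dist A B = D0 A B"
  unfolding C_dist_def D0_def F2_def
  using herm_inner[OF assms(1), of B] herm_inner[OF assms(1), of A] herm_inner[OF assms(2), of B]
  by (simp add: power2_norm_eq_inner)

lemma D0_zero:
  fixes a b :: "'a::real_inner"
  assumes "a \<noteq> 0" "b \<noteq> 0"
  shows "D0 a b = 0 \<longleftrightarrow> a = b"
proof
  assume "a = b" thus "D0 a b = 0" using assms by (simp add: D0_def power2_norm_eq_inner)
next
  assume "D0 a b = 0"
  hence h: "inner a b / max ((norm a)\<^sup>2) ((norm b)\<^sup>2) = 1" by (simp add: D0_def)
  have "max ((norm a)\<^sup>2) ((norm b)\<^sup>2) > 0" using assms by (simp add: max_def)
  hence i: "inner a b = max ((norm a)\<^sup>2) ((norm b)\<^sup>2)" using h by (simp add: field_simps)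
  have "(norm (a - b))\<^sup>2 = (norm a)\<^sup>2 + (norm b)\<^sup>2 - 2 * inner a b"
    by (simp add: power2_norm_eq_inner inner_diff_left inner_diff_right inner_commute)
  also have "\<dots> \<le> 0" using i by (simp add: max_def)
  finally show "a = b" by simp
qed


lemma D0_nonneg:
  fixes a b :: "'a::real_inner"
  assumes "a \<noteq> 0" "b \<noteq> 0"
  shows "D0 a b \<ge> 0"
proof -
  have m: "max ((norm a)\<^sup>2) ((norm b)\<^sup>2) > 0" using assms by (simp add: max_def)
  have "inner a b \<le> norm a * norm b" by (rule norm_cauchy_schwarz)
  also have "\<dots> \<le> max ((norm a)\<^sup>2) ((norm b)\<^sup>2)"
  proof (cases "norm a \<le> norm b")
    case True
    hence "norm a * norm b \<le> norm b * norm b" by (simp add: mult_right_mono)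
    thus ?thesis by (simp add: power2_eq_square)
  next
    case False
    hence "norm a * norm b \<le> norm a * norm a" by (simp add: mult_left_mono)
    thus ?thesis by (simp add: power2_eq_square)
  qed
  finally have "inner a b / max ((norm a)\<^sup>2) ((norm b)\<^sup>2) \<le> 1" using m by simp
  thus ?thesis by (simp add: D0_def)
qed

lemma dm_props:
  fixes A :: "complex^'n::finite^'n"
  assumes "density_matrix A"
  shows "hermitian_mat A" "A \<noteq> 0"
proof -
  show "hermitian_mat A" using assms by (simp add: density_matrix_def psd_mat_def)
  show "A \<noteq> 0"
  proof
    assume "A = 0"
    hence "trace A = 0" by (simp add: trace_def)
    thus False using assms by (simp add: density_matrix_def)
  qed
qed

theorem theorem9:
  fixes \<rho> \<sigma> \<tau> :: "complex^'n::finite^'n"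
  assumes "CARD('n) \<ge> 2"
    and "density_matrix \<rho>" and "density_matrix \<sigma>" and "density_matrix \<tau>"
  shows "C_dist \<rho> \<sigma> \<ge> 0
    \<and> (C_dist \<rho> \<sigma> = 0 \<longleftrightarrow> \<rho> = \<sigma>)
    \<and> C_dist \<rho> \<sigma> = C_dist \<sigma> \<rho>
    \<and> C_dist \<rho> \<sigma> \<le> C_dist \<rho> \<tau> + C_dist \<tau> \<sigma>"
proof -
  note r = dm_props[OF assms(2)] and s = dm_props[OF assms(3)] and t = dm_props[OF assms(4)]
  have e1: "C_dist \<rho> \<sigma> = D0 \<rho> \<sigma>" "C_dist \<sigma> \<rho> = D0 \<sigma> \<rho>"
    "C_dist \<rho> \<tau> = D0 \<rho> \<tau>" "C_dist \<tau> \<sigma> = D0 \<tau> \<sigma>"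
    using C_D0 r s t by blast+
  have "C_dist \<rho> \<sigma> \<ge> 0" using e1 D0_nonneg r s by metis
  moreover have "C_dist \<rho> \<sigma> = 0 \<longleftrightarrow> \<rho> = \<sigma>" using e1 D0_zero r s by metis
  moreover have "D0 \<rho> \<sigma> = D0 \<sigma> \<rho>" by (simp add: D0_def inner_commute max.commute)
  moreover have "D0 \<rho> \<sigma> \<le> D0 \<rho> \<tau> + D0 \<tau> \<sigma>" using D0_tri r s t by blast
  ultimately show ?thesis using e1 by simp
qed

end
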